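(* Let $(b_k)_{k\ge1}$ be positive reals with $\sum_{k=1}^\infty k\,b_k=B^*<\infty$, and let $b_0>0$ be arbitrary. For every $K\ge1$, the multi-resolution LCMM with liquidity parameters $b_0,b_1,\dots,b_K$ has worst-case loss $$\sup_{\boldsymbol\theta\in\mathbb R^{\mathcal Z^*}}\ \sup_{\omega\in\Omega}\bigl[\boldsymbol\theta\cdot\boldsymbol\phi(\omega)-C(\boldsymbol\theta)+C(\mathbf 0)\bigr]\le B^*\log 2,$$ independently of $K$.
   Context: Fix an integer $K\ge1$, $N=2^K$, $\Omega=\{j/N:j=0,\dots,N-1\}$. Let $T^*$ be the complete binary tree of depth $K$ whose nodes are intervals: the root (level $0$) has $I_{\mathit{root}}=[0,1)$, and each node $z$ at level $k<K$ with $I_z=[\alpha_z,\beta_z)$ has children at level $k+1$ with intervals $[\alpha_z,\frac{\alpha_z+\beta_z}2)$ and $[\frac{\alpha_z+\beta_z}2,\beta_z)$. Let $\mathcal Z^*$ be its node set, $\mathcal Z_k$ the nodes at level $k$, $\mathrm{level}(z)$ the level of $z$, and $\mathcal Y^*=\mathcal Z^*\setminus\mathcal Z_K$. Each node $z$ indexes an interval security with payoff $\phi_z(\omega)=1\{\omega\in I_z\}$; $\boldsymbol\phi(\omega)=(\phi_z(\omega))_{z\in\mathcal Z^*}$. With liquidities $b_k>0$, set $B_\ell=\sum_{k=\ell+1}^K b_k$. For $\boldsymbol\theta\in\mathbb R^{\mathcal Z^*}$ let $C_k(\boldsymbol\theta_k)=b_k\log\sum_{z\in\mathcal Z_k}e^{\theta_z/b_k}$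 and $\tilde C(\boldsymbol\theta)=\sum_{k=0}^K C_k(\boldsymbol\theta_k)$. The constraint matrix $\mathbf A\in\mathbb R^{\mathcal Z^*\times\mathcal Y^*}$ has entries $A_{zy}=B_{\mathrm{level}(z)}$ if $z=y$, $-b_{\mathrm{level}(z)}$ if $I_z\subsetneq I_y$, and $0$ otherwise. The multi-resolution LCMM cost function is $C(\boldsymbol\theta)=\inf_{\boldsymbol\eta\in\mathbb R^{\mathcal Y^*}}\tilde C(\boldsymbol\theta+\mathbf A\boldsymbol\eta)$. *)

theory Defs
  imports "HOL-Analysis.Analysis"
begin

text \<open>Nodes of the complete binary tree of depth K are encoded as pairs (k, j):
  level k, position j < 2^k.  Node (k,j) has interval [j/2^k, (j+1)/2^k).
  The root (0,0) has [0,1); the children of (k,j) are (k+1,2j) and (k+1,2j+1),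
  whose intervals are the left and right halves of I_(k,j).\<close>

type_synonym node = "nat \<times> nat"

definition level :: "node \<Rightarrow> nat" where
  "level z = fst z"

definition alpha :: "node \<Rightarrow> real" where
  "alpha z = real (snd z) / 2 ^ fst z"

definition beta :: "node \<Rightarrow> real" where
  "beta z = (real (snd z) + 1) / 2 ^ fst z"

definition interval :: "node \<Rightarrow> real set" where
  "interval z = {alpha z..<beta z}"

definition nodes_at :: "nat \<Rightarrow> node set" where
  "nodes_at k = {(k, j) | j. j < 2 ^ k}"

definition Zstar :: "nat \<Rightarrow> node set" where
  "Zstar K = (\<Union>k\<in>{0..K}. nodes_at k)"

definition Ystar :: "nat \<Rightarrow> node set" where
  "Ystar K = Zstar K - nodes_at K"

definition Omega :: "nat \<Rightarrow> real set" where
  "Omega K = {real j / 2 ^ K | j. j < 2 ^ K}"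

definition phi :: "node \<Rightarrow> real \<Rightarrow> real" where
  "phi z \<omega> = (if \<omega> \<in> interval z then 1 else 0)"

definition Bsum :: "nat \<Rightarrow> (nat \<Rightarrow> real) \<Rightarrow> nat \<Rightarrow> real" where
  "Bsum K b l = (\<Sum>k\<in>{l+1..K}. b k)"

definition Ck :: "(nat \<Rightarrow> real) \<Rightarrow> nat \<Rightarrow> (node \<Rightarrow> real) \<Rightarrow> real" where
  "Ck b k \<theta> = b k * ln (\<Sum>z\<in>nodes_at k. exp (\<theta> z / b k))"

definition Ctilde :: "nat \<Rightarrow> (nat \<Rightarrow> real) \<Rightarrow> (node \<Rightarrow> real) \<Rightarrow> real" where
  "Ctilde K b \<theta> = (\<Sum>k\<in>{0..K}. Ck b k \<theta>)"

definition Amat :: "nat \<Rightarrow> (nat \<Rightarrow> real) \<Rightarrow> node \<Rightarrow> node \<Rightarrow> real" where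
  "Amat K b z y =
     (if z = y then Bsum K b (level z)
      else if interval z \<subset> interval y then - b (level z)
      else 0)"

definition Aapply :: "nat \<Rightarrow> (nat \<Rightarrow> real) \<Rightarrow> (node \<Rightarrow> real) \<Rightarrow> node \<Rightarrow> real" where
  "Aapply K b \<eta> z = (\<Sum>y\<in>Ystar K. Amat K b z y * \<eta> y)"

definition Ccost :: "nat \<Rightarrow> (nat \<Rightarrow> real) \<Rightarrow> (node \<Rightarrow> real) \<Rightarrow> real" where
  "Ccost K b \<theta> = (INF \<eta>\<in>{\<eta>. \<forall>y. y \<notin> Ystar K \<longrightarrow> \<eta> y = 0}.
                      Ctilde K b (\<lambda>z. \<theta> z + Aapply K b \<eta> z))"

definition payoff :: "nat \<Rightarrow> (node \<Rightarrow> real) \<Rightarrow> real \<Rightarrow> real" where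
  "payoff K \<theta> \<omega> = (\<Sum>z\<in>Zstar K. \<theta> z * phi z \<omega>)"

end

theory Submission
  imports Defs
begin

lemma scale_le1:
  assumes "l \<le> k"
  shows "(real x / 2^k \<le> real y / 2^l) \<longleftrightarrow> x \<le> y * 2^(k-l)"
proof -
  have e: "(2::real)^k = 2^l * 2^(k-l)" using assms by (simp add: power_add[symmetric])
  have "(real x / 2^k \<le> real y / 2^l) \<longleftrightarrow> real x \<le> real y * 2^(k-l)"
    unfolding e by (simp add: field_simps)
  also have "\<dots> \<longleftrightarrow> x \<le> y * 2^(k-l)" by (metis of_nat_le_iff of_nat_mult of_nat_numeral of_nat_power)
  finally show ?thesis .
qed

lemma scale_le2:
  assumes "l \<le> k"
  shows "(real y / 2^l \<le> real x / 2^k) \<longleftrightarrow> y * 2^(k-l) \<le> x"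
proof -
  have e: "(2::real)^k = 2^l * 2^(k-l)" using assms by (simp add: power_add[symmetric])
  have "(real y / 2^l \<le> real x / 2^k) \<longleftrightarrow> real y * 2^(k-l) \<le> real x"
    unfolding e by (simp add: field_simps)
  also have "\<dots> \<longleftrightarrow> y * 2^(k-l) \<le> x" by (metis of_nat_le_iff of_nat_mult of_nat_numeral of_nat_power)
  finally show ?thesis .
qed

lemma scale_lt1:
  assumes "l \<le> k"
  shows "(real x / 2^k < real y / 2^l) \<longleftrightarrow> x < y * 2^(k-l)"
  using scale_le2[OF assms, of y x] by linarith

lemma div_char: "(m::nat) > 0 \<Longrightarrow> (i = j div m) \<longleftrightarrow> (i * m \<le> j \<and> j < (i+1)*m)"
  by (metis add.commute div_less_iff_less_mult div_nat_eqI dividend_less_div_times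
      less_mult_imp_div_less mult.commute mult_Suc plus_1_eq_Suc times_div_less_eq_dividend)

lemma mem_interval:
  assumes "k \<le> K"
  shows "(real j / 2^K \<in> interval (k,i)) \<longleftrightarrow> i = j div 2^(K-k)"
proof -
  have "(real j / 2^K \<in> interval (k,i)) \<longleftrightarrow> real i / 2^k \<le> real j / 2^K \<and> real j / 2^K < (real i + 1) / 2^k"
    by (simp add: interval_def alpha_def beta_def)
  also have "\<dots> \<longleftrightarrow> i * 2^(K-k) \<le> j \<and> j < (i+1) * 2^(K-k)"
    using scale_le2[OF assms, of i j] scale_lt1[OF assms, of j "i+1"] by (simp add: add.commute)
  also have "\<dots> \<longleftrightarrow> i = j div 2^(K-k)" by (simp add: div_char)
  finally show ?thesis .
qed

lemma subset_interval:
  "interval (k,i) \<subset> interval (l,i') \<longleftrightarrow> l < k \<and> i div 2^(k-l) = i'"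
proof
  assume s: "interval (k,i) \<subset> interval (l,i')"
  have ne: "real i / 2^k < (real i + 1) / 2^k" by (simp add: divide_strict_right_mono)
  have sub: "real i' / 2^l \<le> real i / 2^k \<and> (real i + 1) / 2^k \<le> (real i' + 1) / 2^l"
    using s ne unfolding interval_def alpha_def beta_def by (auto simp: atLeastLessThan_subset_iff)
  have lk: "l \<le> k"
  proof (rule ccontr)
    assume "\<not> l \<le> k"
    hence kl: "k \<le> l" "k < l" by auto
    have m: "i' \<le> i * 2^(l-k)" using sub scale_le1[OF kl(1), of i' i] by simp
    have n: "(i+1) * 2^(l-k) \<le> i' + 1" using sub scale_le2[OF kl(1), of "i+1" "i'+1"] by (simp add: add.commute)
    have "(2::nat)^1 \<le> 2^(l-k)" by (rule power_increasing) (use kl in auto)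
    hence "(2::nat) \<le> 2^(l-k)" by simp
    moreover have "(i+1) * 2^(l-k) = i * 2^(l-k) + (2::nat)^(l-k)" by (simp add: distrib_right)
    ultimately show False using m n by linarith
  qed
  have A: "i' * 2^(k-l) \<le> i" using sub scale_le2[OF lk, of i' i] by simp
  have B: "i + 1 \<le> (i'+1) * 2^(k-l)" using sub scale_le1[OF lk, of "i+1" "i'+1"] by (simp add: add.commute)
  have "i' = i div 2^(k-l)" using A B div_char[of "2^(k-l)" i' i] by simp
  moreover have "l \<noteq> k"
  proof
    assume "l = k"
    then have "i' = i" using \<open>i' = i div 2^(k-l)\<close> by simp
    then show False using s \<open>l = k\<close> by simp
  qed
  ultimately show "l < k \<and> i div 2^(k-l) = i'" using lk by simp
next
  assume h: "l < k \<and> i div 2^(k-l) = i'"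
  hence lk: "l \<le> k" by simp
  have A: "i' * 2^(k-l) \<le> i" "i < (i'+1) * 2^(k-l)" using h div_char[of "2^(k-l)" i' i] by auto
  have sub: "real i' / 2^l \<le> real i / 2^k" "(real i + 1) / 2^k \<le> (real i' + 1) / 2^l"
    using A scale_le2[OF lk, of i' i] scale_le1[OF lk, of "i+1" "i'+1"] by (simp_all add: add.commute)
  have "interval (k,i) \<subseteq> interval (l,i')"
    using sub unfolding interval_def alpha_def beta_def by (auto simp: atLeastLessThan_subset_iff)
  moreover have "interval (k,i) \<noteq> interval (l,i')"
  proof
    assume "interval (k,i) = interval (l,i')"
    hence "real i / 2^k = real i' / 2^l" "(real i + 1) / 2^k = (real i' + 1) / 2^l"
      unfolding interval_def alpha_def beta_def
      by (auto simp: atLeastLessThan_eq_iff divide_strict_right_mono)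
    hence "1 / (2::real)^k = 1 / 2^l" by (simp add: diff_divide_distrib[symmetric] add_divide_distrib)
    hence "(2::real)^k = 2^l" by simp
    hence "k = l" by simp
    then show False using h by simp
  qed
  ultimately show "interval (k,i) \<subset> interval (l,i')" by blast
qed


lemma nodes_at_eq: "nodes_at k = Pair k ` {..<2^k}"
  unfolding nodes_at_def by auto

lemma finite_nodes_at[simp]: "finite (nodes_at k)"
  unfolding nodes_at_eq by simp

lemma card_nodes_at: "card (nodes_at k) = 2^k"
  unfolding nodes_at_eq by (simp add: card_image inj_on_def)

lemma nd_in:
  assumes "k \<le> K" "j < 2^K"
  shows "(k, j div 2^(K-k)) \<in> nodes_at k"
proof -
  have "(2::nat)^K = 2^k * 2^(K-k)" using assms(1) by (simp add: power_add[symmetric])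
  hence "j < 2^k * 2^(K-k)" using assms(2) by simp
  hence "j div 2^(K-k) < 2^k" by (simp add: div_less_iff_less_mult)
  thus ?thesis unfolding nodes_at_def by auto
qed

lemma sum_level:
  assumes "k \<le> K" "j < 2^K"
  shows "(\<Sum>z\<in>nodes_at k. f z * phi z (real j / 2^K)) = f (k, j div 2^(K-k))"
proof -
  have "(\<Sum>z\<in>nodes_at k. f z * phi z (real j / 2^K))
      = (\<Sum>z\<in>nodes_at k. if z = (k, j div 2^(K-k)) then f z else 0)"
  proof (rule sum.cong)
    fix z assume "z \<in> nodes_at k"
    then obtain i where z: "z = (k,i)" unfolding nodes_at_def by auto
    show "f z * phi z (real j / 2^K) = (if z = (k, j div 2^(K-k)) then f z else 0)"
      using mem_interval[OF assms(1), of j i] unfolding z phi_def by auto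
  qed simp
  also have "\<dots> = f (k, j div 2^(K-k))"
    using nd_in[OF assms] by (simp add: sum.delta')
  finally show ?thesis .
qed

lemma sum_Zstar: "(\<Sum>z\<in>Zstar K. g z) = (\<Sum>k\<in>{0..K}. \<Sum>z\<in>nodes_at k. g z)"
  unfolding Zstar_def
  by (rule sum.UNION_disjoint) (auto simp: nodes_at_def)

lemma finite_Zstar[simp]: "finite (Zstar K)"
  unfolding Zstar_def by simp

lemma finite_Ystar[simp]: "finite (Ystar K)"
  unfolding Ystar_def by simp

lemma payoff_eq:
  assumes "j < 2^K"
  shows "payoff K x (real j / 2^K) = (\<Sum>k\<in>{0..K}. x (k, j div 2^(K-k)))"
  unfolding payoff_def sum_Zstar
  by (rule sum.cong) (use sum_level assms in auto)

lemma Ck_ge: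
  assumes "b k > 0" "z \<in> nodes_at k"
  shows "x z \<le> Ck b k x"
proof -
  have "exp (x z / b k) \<le> (\<Sum>z\<in>nodes_at k. exp (x z / b k))"
    by (rule member_le_sum) (use assms in auto)
  hence "x z / b k \<le> ln (\<Sum>z\<in>nodes_at k. exp (x z / b k))"
    by (metis exp_gt_zero ln_exp ln_le_cancel_iff order_less_le_trans)
  hence "x z \<le> b k * ln (\<Sum>z\<in>nodes_at k. exp (x z / b k))"
    using assms(1) by (simp add: pos_divide_le_eq mult.commute)
  thus ?thesis using assms(1) unfolding Ck_def by simp
qed

lemma Ctilde_ge:
  assumes "j < 2^K" "\<And>k. b k > 0"
  shows "payoff K x (real j / 2^K) \<le> Ctilde K b x"
  unfolding payoff_eq[OF assms(1)] Ctilde_def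
  by (rule sum_mono) (use Ck_ge nd_in assms in auto)

lemma Amat_nd:
  assumes "k \<le> K" "l \<le> K"
  shows "Amat K b (k, j div 2^(K-k)) (l,i') =
    (if k = l \<and> j div 2^(K-l) = i' then Bsum K b l
     else if l < k \<and> j div 2^(K-l) = i' then - b k else 0)"
proof -
  have dv: "j div 2^(K-k) div 2^(k-l) = j div 2^(K-l)" if "l < k"
  proof -
    have "(2::nat)^(K-k) * 2^(k-l) = 2^(K-l)" using that assms by (simp add: power_add[symmetric])
    thus ?thesis by (metis div_mult2_eq)
  qed
  show ?thesis unfolding Amat_def level_def subset_interval using dv by auto
qed

lemma inner_zero:
  assumes "j < 2^K" "y \<in> Ystar K"
  shows "(\<Sum>z\<in>Zstar K. Amat K b z y * phi z (real j / 2^K)) = 0"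
proof -
  obtain l i' where y0: "y = (l,i')" "l \<le> K" "i' < 2^l"
    using assms(2) unfolding Ystar_def Zstar_def nodes_at_def by auto
  have "l \<noteq> K" using assms(2) y0 unfolding Ystar_def nodes_at_def by auto
  hence y: "y = (l,i')" "l < K" using y0 by auto
  define c where "c = (j div 2^(K-l) = i')"
  have "(\<Sum>z\<in>Zstar K. Amat K b z y * phi z (real j / 2^K))
     = (\<Sum>k\<in>{0..K}. Amat K b (k, j div 2^(K-k)) y)"
    unfolding sum_Zstar by (rule sum.cong) (use sum_level assms in auto)
  also have "\<dots> = (\<Sum>k\<in>{0..K}. if c then ((if k = l then Bsum K b l else 0) + (if l < k then - b k else 0)) else 0)"
    by (rule sum.cong) (use Amat_nd y in \<open>auto simp: c_def\<close>)
  also have "\<dots> = 0"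
  proof (cases c)
    case True
    have e: "(\<Sum>k\<in>{0..K}. if l<k then - b k else 0) = (\<Sum>k\<in>{k\<in>{0..K}. l < k}. - b k)"
      by (rule sum.inter_filter[symmetric]) simp
    have "(\<Sum>k\<in>{0..K}. (if k = l then Bsum K b l else 0) + (if l < k then - b k else 0))
        = Bsum K b l + (\<Sum>k\<in>{k\<in>{0..K}. l < k}. - b k)"
      using y by (simp only: sum.distrib e) simp
    also have "{k\<in>{0..K}. l < k} = {l+1..K}" by auto
    finally show ?thesis using True by (simp add: Bsum_def sum_negf)
  qed simp
  finally show ?thesis .
qed

lemma payoff_A:
  assumes "j < 2^K"
  shows "payoff K (Aapply K b \<eta>) (real j / 2^K) = 0"
proof -
  have "payoff K (Aapply K b \<eta>) (real j / 2^K)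
     = (\<Sum>z\<in>Zstar K. \<Sum>y\<in>Ystar K. \<eta> y * (Amat K b z y * phi z (real j / 2^K)))"
    unfolding payoff_def Aapply_def unfolding sum_distrib_right by (simp only: mult_ac)
  also have "\<dots> = (\<Sum>y\<in>Ystar K. \<eta> y * (\<Sum>z\<in>Zstar K. Amat K b z y * phi z (real j / 2^K)))"
    by (subst sum.swap) (simp add: sum_distrib_left)
  also have "\<dots> = 0" using inner_zero[OF assms] by simp
  finally show ?thesis .
qed

theorem theorem4:
  fixes b :: "nat \<Rightarrow> real" and K :: nat
  assumes bpos: "\<And>k. b k > 0"
    and summ: "summable (\<lambda>k. real k * b k)"
    and K: "K \<ge> 1"
  shows "\<forall>\<theta> :: node \<Rightarrow> real. \<forall>\<omega>\<in>Omega K.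
           payoff K \<theta> \<omega> - Ccost K b \<theta> + Ccost K b (\<lambda>_. 0)
             \<le> (\<Sum>k. real k * b k) * ln 2"
proof (intro allI ballI)
  fix \<theta> :: "node \<Rightarrow> real" and \<omega> assume "\<omega> \<in> Omega K"
  then obtain j where j: "\<omega> = real j / 2^K" "j < 2^K" unfolding Omega_def by auto
  define S where "S = {\<eta> :: node \<Rightarrow> real. \<forall>y. y \<notin> Ystar K \<longrightarrow> \<eta> y = 0}"
  have S0: "(\<lambda>_. 0) \<in> S" unfolding S_def by simp
  have low: "payoff K t \<omega> \<le> Ctilde K b (\<lambda>z. t z + Aapply K b \<eta> z)" for t \<eta>
  proof -
    have "payoff K (\<lambda>z. t z + Aapply K b \<eta> z) \<omega> = payoff K t \<omega> + payoff K (Aapply K b \<eta>) \<omega>"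
      unfolding payoff_def by (simp add: sum.distrib distrib_right)
    also have "\<dots> = payoff K t \<omega>" using payoff_A[OF j(2)] j(1) by simp
    finally have e: "payoff K (\<lambda>z. t z + Aapply K b \<eta> z) \<omega> = payoff K t \<omega>" .
    have g: "payoff K (\<lambda>z. t z + Aapply K b \<eta> z) \<omega> \<le> Ctilde K b (\<lambda>z. t z + Aapply K b \<eta> z)"
      unfolding j(1) by (rule Ctilde_ge[OF j(2) bpos])
    show ?thesis using e g by linarith
  qed
  have c1: "payoff K \<theta> \<omega> \<le> Ccost K b \<theta>"
    unfolding Ccost_def S_def[symmetric]
    by (rule cINF_greatest) (use S0 low in auto)
  have c2: "Ccost K b (\<lambda>_. 0) \<le> Ctilde K b (\<lambda>z. 0 + Aapply K b (\<lambda>_. 0) z)"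
  proof -
    have bb: "bdd_below ((\<lambda>\<eta>. Ctilde K b (\<lambda>z. 0 + Aapply K b \<eta> z)) ` S)"
      by (rule bdd_belowI2[where m="payoff K (\<lambda>_. 0) \<omega>"]) (rule low)
    show ?thesis unfolding Ccost_def S_def[symmetric] by (rule cINF_lower[OF bb S0])
  qed
  have c3: "Ctilde K b (\<lambda>z. 0 + Aapply K b (\<lambda>_. 0) z) = (\<Sum>k\<in>{0..K}. real k * b k) * ln 2"
    unfolding Ctilde_def Aapply_def Ck_def
    by (simp add: card_nodes_at ln_realpow sum_distrib_right, rule sum.cong, simp_all add: mult_ac)
  have c4: "(\<Sum>k\<in>{0..K}. real k * b k) \<le> (\<Sum>k. real k * b k)"
    by (rule sum_le_suminf[OF summ]) (use bpos in \<open>auto intro: less_imp_le\<close>)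
  have "(\<Sum>k\<in>{0..K}. real k * b k) * ln 2 \<le> (\<Sum>k. real k * b k) * ln 2"
    using c4 by (simp add: mult_right_mono)
  thus "payoff K \<theta> \<omega> - Ccost K b \<theta> + Ccost K b (\<lambda>_. 0) \<le> (\<Sum>k. real k * b k) * ln 2"
    using c1 c2 c3 by linarith
qed

end
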